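(* Let $G$ be a connected graph with $N$ vertices and maximum degree $\Delta$, let $R$ be a positive integer, and assume $N>\Delta^{4R}+1$. Let $H$ be an operator (not necessarily Hermitian) on the qubits at the vertices of $G$ that has range at most $R$ and satisfies $H|W\rangle=\lambda|W\rangle$ for some $\lambda\in\mathbb{C}$. Then there exist constants $\Omega,\omega\in\mathbb{C}$ and operators $h_X$, indexed by subsets $X$ of vertices with $\mathrm{diam}(X)\le 2R$, each supported in $X$ and satisfying $h_X|W\rangle=h_X|\overline 0\rangle=0$, such that $$H=\Omega I+\omega\sum_i s_i^\dagger s_i+\sum_{X:\mathrm{diam}(X)\le 2R}h_X .$$
   Context: System of $N$ qubits on the vertices of a graph $G$ with local basis $|0\rangle,|1\rangle$. For each vertex $i$, $s_i^\dagger$ acts on $i$ as $s^\dagger|0\rangle=|1\rangle$, $s^\dagger|1\rangle=0$, $s_i=(s_i^\dagger)^\dagger$; $|\overline 0\rangle=|0\rangle^{\otimes N}$. Distances $|\mathbf r_i-\mathbf r_j|$ are graph distances. Every operator has a unique expansion in normal-ordered strings $s^\dagger_{j_1}\cdots s^\dagger_{j_n}s_{k_1}\cdots s_{k_m}$ (the $j$'s pairwise distinct, the $k$'s pairwise distinct, overlaps allowed; the empty string is $I$), whose sites are $\{j_1,\dots,j_n,k_1,\dots,k_m\}$. A string has range $R$, where $R$ is the smallest positive integer with all pairwise distances between its sites $<R$; an operator has range at most $R$ if every string with nonzero coefficient has range at most $R$. For a vertex set $X$, $\mathrm{diam}(X)=1+\max_{i,j\in X}|\mathbf r_i-\mathbf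 r_j|$. An operator is supported in $X$ if it acts as the identity outside $X$. $|W\rangle=N^{-1/2}\sum_i s_i^\dagger|\overline 0\rangle$. *)

theory Defs
  imports Complex_Main "HOL-Library.Function_Algebras"
begin

text \<open>Computational basis states are indexed by the set of vertices in state 1.
  An operator is its matrix: Op S T = <S|Op|T>.\<close>

type_synonym 'v op = "'v set \<Rightarrow> 'v set \<Rightarrow> complex"
type_synonym 'v vec = "'v set \<Rightarrow> complex"

definition edges :: "('v \<Rightarrow> 'v \<Rightarrow> bool) \<Rightarrow> ('v \<times> 'v) set" where
  "edges E = {(a, b). E a b}"

definition simple_graph :: "('v \<Rightarrow> 'v \<Rightarrow> bool) \<Rightarrow> bool" where
  "simple_graph E \<longleftrightarrow> (\<forall>a b. E a b \<longrightarrow> E b a) \<and> (\<forall>a. \<not> E a a)"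

definition connected_graph :: "('v \<Rightarrow> 'v \<Rightarrow> bool) \<Rightarrow> bool" where
  "connected_graph E \<longleftrightarrow> (\<forall>a b. (a, b) \<in> (edges E)\<^sup>*)"

definition gdist :: "('v \<Rightarrow> 'v \<Rightarrow> bool) \<Rightarrow> 'v \<Rightarrow> 'v \<Rightarrow> nat" where
  "gdist E a b = (LEAST n. (a, b) \<in> (edges E) ^^ n)"

definition max_degree :: "('v::finite \<Rightarrow> 'v \<Rightarrow> bool) \<Rightarrow> nat" where
  "max_degree E = Max (range (\<lambda>v. card {u. E v u}))"

definition str_range :: "('v \<Rightarrow> 'v \<Rightarrow> bool) \<Rightarrow> 'v set \<Rightarrow> nat" where
  "str_range E S = (LEAST R. 0 < R \<and> (\<forall>i\<in>S. \<forall>j\<in>S. gdist E i j < R))"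

text \<open>diam X = 1 + max pairwise distance (for X = {} this gives 1; irrelevant).\<close>
definition diam :: "('v \<Rightarrow> 'v \<Rightarrow> bool) \<Rightarrow> 'v set \<Rightarrow> nat" where
  "diam E X = 1 + Sup {gdist E i j | i j. i \<in> X \<and> j \<in> X}"

text \<open>Matrix of the normal-ordered string s^dag_{J} s_{K} (product over J of creations,
  over K of annihilations).\<close>
definition sstr :: "'v set \<Rightarrow> 'v set \<Rightarrow> 'v op" where
  "sstr J K S T = (if K \<subseteq> T \<and> J \<inter> (T - K) = {} \<and> S = (T - K) \<union> J then 1 else 0)"

definition range_le :: "('v::finite \<Rightarrow> 'v \<Rightarrow> bool) \<Rightarrow> nat \<Rightarrow> 'v op \<Rightarrow> bool" where
  "range_le E R H \<longleftrightarrow> (\<exists>c :: 'v set \<Rightarrow> 'v set \<Rightarrow> complex.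
      H = (\<lambda>S T. \<Sum>J\<in>UNIV. \<Sum>K\<in>UNIV. c J K * sstr J K S T) \<and>
      (\<forall>J K. c J K \<noteq> 0 \<longrightarrow> str_range E (J \<union> K) \<le> R))"

definition op_apply :: "'v::finite op \<Rightarrow> 'v vec \<Rightarrow> 'v vec" where
  "op_apply H \<psi> = (\<lambda>S. \<Sum>T\<in>UNIV. H S T * \<psi> T)"

definition id_op :: "'v op" where
  "id_op S T = (if S = T then 1 else 0)"

definition smult_op :: "complex \<Rightarrow> 'v op \<Rightarrow> 'v op" where
  "smult_op a H = (\<lambda>S T. a * H S T)"

text \<open>Supported in X: H = A \<otimes> I on the complement of X.\<close>
definition supported_in :: "'v set \<Rightarrow> 'v op \<Rightarrow> bool" where
  "supported_in X H \<longleftrightarrow> (\<exists>A :: 'v op. \<forall>S T.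
      H S T = (if S - X = T - X then A (S \<inter> X) (T \<inter> X) else 0))"

definition vac :: "'v vec" where
  "vac S = (if S = {} then 1 else 0)"

definition Wstate :: "'v::finite vec" where
  "Wstate S = (if card S = 1 then 1 / complex_of_real (sqrt (real (card (UNIV :: 'v set)))) else 0)"

end

theory Submission
  imports Defs
begin

lemma relpow_sym:
  assumes "simple_graph E" "(x, y) \<in> edges E ^^ n"
  shows "(y, x) \<in> edges E ^^ n"
  using assms(2)
proof (induction n arbitrary: y)
  case 0 then show ?case by auto
next
  case (Suc n)
  from Suc.prems obtain z where "(x, z) \<in> edges E ^^ n" "(z, y) \<in> edges E" by (rule relpow_Suc_E)
  then have "(z, x) \<in> edges E ^^ n" "(y, z) \<in> edges E"
    using Suc.IH assms(1) by (auto simp: edges_def simple_graph_def)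
  then show ?case using relpow_Suc_I2 by metis
qed

lemma gdist_ex:
  assumes "connected_graph E"
  shows "(a, b) \<in> edges E ^^ gdist E a b"
proof -
  from assms have "\<exists>n. (a, b) \<in> edges E ^^ n"
    by (simp add: connected_graph_def rtrancl_power)
  then show ?thesis unfolding gdist_def by (rule LeastI_ex)
qed

lemma gdist_le:
  "(a, b) \<in> edges E ^^ n \<Longrightarrow> gdist E a b \<le> n"
  unfolding gdist_def by (rule Least_le)

lemma gdist_sym:
  assumes "simple_graph E" "connected_graph E"
  shows "gdist E a b = gdist E b a"
  using gdist_le[OF relpow_sym[OF assms(1) gdist_ex[OF assms(2)]]] 
    gdist_le[OF relpow_sym[OF assms(1) gdist_ex[OF assms(2), of b a]]]
  by (simp add: le_antisym)

lemma gdist_self: "gdist E a a = 0"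
  using gdist_le[where n=0 and a=a and b=a and E=E] by simp

lemma gdist_zero:
  assumes "connected_graph E" "gdist E a b = 0" shows "b = a"
  using gdist_ex[OF assms(1), of a b] assms(2) by auto

lemma gdist_edge: "E a b \<Longrightarrow> gdist E a b \<le> 1"
  using gdist_le[where n=1 and a=a and b=b and E=E] by (simp add: edges_def)

lemma gdist_pred:
  assumes "connected_graph E" "gdist E x y = Suc t"
  shows "\<exists>z. gdist E x z = t \<and> E z y"
proof -
  have "(x, y) \<in> edges E ^^ Suc t" using gdist_ex[OF assms(1), of x y] assms(2) by simp
  then obtain z where z: "(x, z) \<in> edges E ^^ t" "(z, y) \<in> edges E" by (rule relpow_Suc_E)
  have le: "gdist E x z \<le> t" using gdist_le[OF z(1)] .
  have "(x, y) \<in> edges E ^^ Suc (gdist E x z)"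
    using relpow_Suc_I[OF gdist_ex[OF assms(1), of x z] z(2)] .
  then have "Suc t \<le> Suc (gdist E x z)" using gdist_le assms(2) by metis
  with le have "gdist E x z = t" by simp
  with z(2) show ?thesis by (auto simp: edges_def)
qed

lemma deg_le: "card {u. E v u} \<le> max_degree (E :: 'v::finite \<Rightarrow> _)"
  unfolding max_degree_def by (rule Max_ge) auto

lemma sphere_card:
  fixes E :: "'v::finite \<Rightarrow> 'v \<Rightarrow> bool"
  assumes "connected_graph E"
  shows "card {y. gdist E x y = t} \<le> max_degree E ^ t"
proof (induction t)
  case 0
  have "{y. gdist E x y = 0} \<subseteq> {x}" using gdist_zero[OF assms] by auto
  then have "card {y. gdist E x y = 0} \<le> card {x}" by (intro card_mono) auto
  then show ?case by simp
next
  case (Suc t)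
  have "{y. gdist E x y = Suc t} \<subseteq> (\<Union>z\<in>{y. gdist E x y = t}. {u. E z u})"
    using gdist_pred[OF assms] by blast
  then have "card {y. gdist E x y = Suc t} \<le> card (\<Union>z\<in>{y. gdist E x y = t}. {u. E z u})"
    by (intro card_mono) auto
  also have "\<dots> \<le> (\<Sum>z\<in>{y. gdist E x y = t}. card {u. E z u})"
    by (rule card_UN_le) auto
  also have "\<dots> \<le> (\<Sum>z\<in>{y. gdist E x y = t}. max_degree E)"
    by (intro sum_mono deg_le)
  also have "\<dots> = card {y. gdist E x y = t} * max_degree E" by simp
  also have "\<dots> \<le> max_degree E ^ t * max_degree E" using Suc by simp
  finally show ?case by (simp add: mult.commute)
qed

lemma geom_lt: "(2::nat) \<le> d \<Longrightarrow> (\<Sum>t<r. d ^ t) < d ^ r"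
proof (induction r)
  case 0 then show ?case by simp
next
  case (Suc r)
  have "(\<Sum>t<Suc r. d ^ t) = (\<Sum>t<r. d ^ t) + d ^ r" by simp
  also have "\<dots> < d ^ r + d ^ r" using Suc by simp
  also have "\<dots> \<le> d * d ^ r" using Suc.prems by (simp add: mult_2[symmetric])
  finally show ?case by simp
qed

lemma ball_card:
  fixes E :: "'v::finite \<Rightarrow> 'v \<Rightarrow> bool"
  assumes "connected_graph E" "2 \<le> max_degree E"
  shows "card {y. gdist E x y < r} < max_degree E ^ r"
proof -
  have "{y. gdist E x y < r} = (\<Union>t<r. {y. gdist E x y = t})" by auto
  then have "card {y. gdist E x y < r} \<le> (\<Sum>t<r. card {y. gdist E x y = t})"
    by (simp add: card_UN_le)
  also have "\<dots> \<le> (\<Sum>t<r. max_degree E ^ t)" by (intro sum_mono sphere_card assms)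
  also have "\<dots> < max_degree E ^ r" by (rule geom_lt[OF assms(2)])
  finally show ?thesis .
qed

lemma far_exists:
  fixes E :: "'v::finite \<Rightarrow> 'v \<Rightarrow> bool"
  assumes "connected_graph E" "2 \<le> max_degree E"
    and "card F * max_degree E ^ r < card (UNIV :: 'v set)"
  shows "\<exists>y. \<forall>x\<in>F. r \<le> gdist E x y"
proof (rule ccontr)
  assume "\<not> ?thesis"
  then have "UNIV \<subseteq> (\<Union>x\<in>F. {y. gdist E x y < r})" by (auto simp: not_le)
  then have "card (UNIV :: 'v set) \<le> card (\<Union>x\<in>F. {y. gdist E x y < r})"
    by (intro card_mono) auto
  also have "\<dots> \<le> (\<Sum>x\<in>F. card {y. gdist E x y < r})" by (rule card_UN_le) auto
  also have "\<dots> \<le> (\<Sum>x\<in>F. max_degree E ^ r)" by (intro sum_mono less_imp_le ball_card assms)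
  also have "\<dots> = card F * max_degree E ^ r" by simp
  finally show False using assms(3) by simp
qed

lemma deg_ge2:
  fixes E :: "'v::finite \<Rightarrow> 'v \<Rightarrow> bool"
  assumes sg: "simple_graph E" and cg: "connected_graph E" and R: "0 < R"
    and N: "card (UNIV :: 'v set) > max_degree E ^ (4 * R) + 1"
  shows "2 \<le> max_degree E"
proof (rule ccontr)
  assume "\<not> ?thesis"
  then have D: "max_degree E \<le> 1" by simp
  fix x :: 'v
  have all: "gdist E x y \<le> 1" for y
  proof (induction "gdist E x y" arbitrary: y rule: less_induct)
    case less
    show ?case
    proof (rule ccontr)
      assume "\<not> gdist E x y \<le> 1"
      then obtain t where t: "gdist E x y = Suc t" "1 \<le> t" by (cases "gdist E x y") auto
      obtain z where z: "gdist E x z = t" "E z y" using gdist_pred[OF cg t(1)] by blast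
      have "gdist E x z \<le> 1" using less[of z] z t by simp
      with t z have "gdist E x z = Suc 0" by simp
      then obtain z0 where z0: "gdist E x z0 = 0" "E z0 z" using gdist_pred[OF cg] by blast
      have "z0 = x" using gdist_zero[OF cg z0(1)] .
      with z0 sg have "E z x" by (auto simp: simple_graph_def)
      have "x \<noteq> y" using t gdist_self[of E x] by auto
      have "{x, y} \<subseteq> {u. E z u}" using \<open>E z x\<close> z by auto
      then have "card {x, y} \<le> card {u. E z u}" by (intro card_mono) auto
      with \<open>x \<noteq> y\<close> deg_le[of E z] D show False by simp
    qed
  qed
  have "UNIV \<subseteq> insert x {u. E x u}"
  proof
    fix y :: 'v
    have "(x, y) \<in> edges E ^^ gdist E x y" by (rule gdist_ex[OF cg])
    moreover have "gdist E x y = 0 \<or> gdist E x y = 1" using all[of y] by auto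
    ultimately show "y \<in> insert x {u. E x u}" by (auto simp: edges_def)
  qed
  then have "card (UNIV :: 'v set) \<le> card (insert x {u. E x u})" by (intro card_mono) auto
  also have "\<dots> \<le> Suc (card {u. E x u})" by (rule card_insert_le_m1) (auto simp: card_insert_if)
  finally have "card (UNIV :: 'v set) \<le> Suc (max_degree E)" using deg_le[of E x] by simp
  moreover have "max_degree E ^ (4 * R) + 1 \<ge> Suc (max_degree E)"
    using D R by (cases "max_degree E = 0") (auto simp: power_0_left le_Suc_eq)
  ultimately show False using N by simp
qed

lemma sum_fun_apply2:
  "(\<Sum>i\<in>I. f i) S T = (\<Sum>i\<in>I. f i S T)"
  by (induction I rule: infinite_finite_induct) auto

lemma sum_single_UNIV:
  fixes f :: "'a::finite \<Rightarrow> 'b::comm_monoid_add"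
  assumes "\<And>x. x \<noteq> a \<Longrightarrow> f x = 0"
  shows "(\<Sum>x\<in>UNIV. f x) = f a"
proof -
  have "(\<Sum>x\<in>UNIV. f x) = (\<Sum>x\<in>UNIV. if x = a then f a else 0)"
    by (rule sum.cong) (auto simp: assms)
  then show ?thesis by simp
qed

lemma op_apply_diff: "op_apply (A - B) \<psi> = (\<lambda>S. op_apply A \<psi> S - op_apply B \<psi> S)"
  by (simp add: op_apply_def sum_subtractf left_diff_distrib)

lemma op_apply_add: "op_apply (A + B) \<psi> = (\<lambda>S. op_apply A \<psi> S + op_apply B \<psi> S)"
  by (simp add: op_apply_def sum.distrib distrib_right)

lemma op_apply_smult: "op_apply (smult_op a A) \<psi> = (\<lambda>S. a * op_apply A \<psi> S)"
  by (simp add: op_apply_def smult_op_def sum_distrib_left mult.assoc)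

lemma op_apply_zero: "op_apply 0 \<psi> = (\<lambda>S. 0)"
  by (simp add: op_apply_def)

lemma W1: "op_apply (sstr J {k}) (Wstate :: 'v::finite vec) S = (if S = J then Wstate {k} else 0)"
  unfolding op_apply_def
proof (subst sum_single_UNIV[where a="{k}"])
  fix T :: "'v set" assume "T \<noteq> {k}"
  then show "sstr J {k} S T * Wstate T = 0"
    by (auto simp: sstr_def Wstate_def card_1_singleton_iff)
qed (auto simp: sstr_def)

lemma W0: "op_apply (sstr J {}) (\<psi> :: 'v::finite vec) S = (if J \<subseteq> S then \<psi> (S - J) else 0)"
  unfolding op_apply_def
proof (subst sum_single_UNIV[where a="S - J"])
  fix T :: "'v set" assume "T \<noteq> S - J"
  then show "sstr J {} S T * \<psi> T = 0"
    by (auto simp: sstr_def)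
qed (auto simp: sstr_def)

lemma W2:
  assumes "2 \<le> card K"
  shows "op_apply (sstr J K) (Wstate :: 'v::finite vec) = (\<lambda>_. 0)"
proof -
  have "sstr J K S T * Wstate T = 0" for S T
  proof (cases "K \<subseteq> T")
    case True
    then have "card K \<le> card T" by (intro card_mono) auto
    then show ?thesis using assms by (auto simp: Wstate_def)
  qed (auto simp: sstr_def)
  then show ?thesis unfolding op_apply_def by (simp only: sum.neutral_const)
qed

lemma V:
  assumes "K \<noteq> {}"
  shows "op_apply (sstr J K) (vac :: 'v::finite vec) = (\<lambda>_. 0)"
proof -
  have "sstr J K S T * vac T = 0" for S T
    using assms by (auto simp: sstr_def vac_def)
  then show ?thesis unfolding op_apply_def by (simp only: sum.neutral_const)
qed

lemma supp_sstr:
  assumes "J \<union> K \<subseteq> X"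
  shows "supported_in X (sstr J K)"
  unfolding supported_in_def
proof (intro exI allI)
  fix S T
  show "sstr J K S T = (if S - X = T - X then sstr J K (S \<inter> X) (T \<inter> X) else 0)"
  proof (cases "S - X = T - X")
    case True
    have "(K \<subseteq> T \<and> J \<inter> (T - K) = {} \<and> S = T - K \<union> J) \<longleftrightarrow>
          (K \<subseteq> T \<inter> X \<and> J \<inter> (T \<inter> X - K) = {} \<and> S \<inter> X = T \<inter> X - K \<union> J)"
      using assms True by blast
    then show ?thesis using True by (simp add: sstr_def)
  next
    case False
    then have "\<not> (S = T - K \<union> J)" using assms by blast
    then show ?thesis using False by (simp add: sstr_def)
  qed
qed

lemma supp_diff: "supported_in X A \<Longrightarrow> supported_in X B \<Longrightarrow> supported_in X (A - B)"
  unfolding supported_in_def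
  apply (elim exE)
  subgoal for a b by (rule exI[where x="\<lambda>S T. a S T - b S T"]) auto
  done

lemma supp_add: "supported_in X A \<Longrightarrow> supported_in X B \<Longrightarrow> supported_in X (A + B)"
  unfolding supported_in_def
  apply (elim exE)
  subgoal for a b by (rule exI[where x="\<lambda>S T. a S T + b S T"]) auto
  done

lemma supp_smult: "supported_in X A \<Longrightarrow> supported_in X (smult_op c A)"
  unfolding supported_in_def smult_op_def
  apply (elim exE)
  subgoal for a by (rule exI[where x="\<lambda>S T. c * a S T"]) auto
  done

lemma supp_zero: "supported_in X 0"
  unfolding supported_in_def by (rule exI[where x="\<lambda>S T. 0"]) auto

definition goodop :: "'v::finite set \<Rightarrow> 'v op \<Rightarrow> bool" where
  "goodop X A \<longleftrightarrow> supported_in X A \<and> op_apply A Wstate = (\<lambda>_. 0) \<and> op_apply A vac = (\<lambda>_. 0)"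

definition decomp :: "('v::finite \<Rightarrow> 'v \<Rightarrow> bool) \<Rightarrow> nat \<Rightarrow> 'v op \<Rightarrow> bool" where
  "decomp E R A \<longleftrightarrow> (\<exists>h. (\<forall>X. diam E X \<le> 2 * R \<longrightarrow> goodop X (h X)) \<and>
      A = (\<Sum>X\<in>{X. diam E X \<le> 2 * R}. h X))"

lemma good_zero: "goodop X 0"
  by (simp add: goodop_def supp_zero op_apply_zero)

lemma good_add: "goodop X A \<Longrightarrow> goodop X B \<Longrightarrow> goodop X (A + B)"
  by (simp add: goodop_def supp_add op_apply_add)

lemma good_smult: "goodop X A \<Longrightarrow> goodop X (smult_op c A)"
  by (simp add: goodop_def supp_smult op_apply_smult)

lemma decomp_zero: "decomp E R 0"
  unfolding decomp_def by (rule exI[where x="\<lambda>_. 0"]) (simp add: good_zero)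

lemma decomp_add:
  assumes "decomp E R A" "decomp E R B" shows "decomp E R (A + B)"
proof -
  obtain a b where a: "\<forall>X. diam E X \<le> 2 * R \<longrightarrow> goodop X (a X)" "A = (\<Sum>X\<in>{X. diam E X \<le> 2 * R}. a X)"
    and b: "\<forall>X. diam E X \<le> 2 * R \<longrightarrow> goodop X (b X)" "B = (\<Sum>X\<in>{X. diam E X \<le> 2 * R}. b X)"
    using assms unfolding decomp_def by blast
  show ?thesis unfolding decomp_def
  proof (rule exI[where x="\<lambda>X. a X + b X"], intro conjI allI impI)
    fix X assume "diam E X \<le> 2 * R"
    then show "goodop X (a X + b X)" using a(1) b(1) good_add by blast
  next
    show "A + B = (\<Sum>X\<in>{X. diam E X \<le> 2 * R}. a X + b X)"
      by (simp only: a(2) b(2) sum.distrib)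
  qed
qed

lemma smult_sum: "smult_op c (\<Sum>i\<in>I. f i) = (\<Sum>i\<in>I. smult_op c (f i))"
  by (intro ext) (simp add: smult_op_def sum_fun_apply2 sum_distrib_left)

lemma decomp_smult:
  assumes "decomp E R A" shows "decomp E R (smult_op c A)"
proof -
  obtain a where a: "\<forall>X. diam E X \<le> 2 * R \<longrightarrow> goodop X (a X)" "A = (\<Sum>X\<in>{X. diam E X \<le> 2 * R}. a X)"
    using assms unfolding decomp_def by blast
  show ?thesis unfolding decomp_def
  proof (rule exI[where x="\<lambda>X. smult_op c (a X)"], intro conjI allI impI)
    fix X assume "diam E X \<le> 2 * R"
    then show "goodop X (smult_op c (a X))" using a(1) good_smult by blast
  next
    show "smult_op c A = (\<Sum>X\<in>{X. diam E X \<le> 2 * R}. smult_op c (a X))"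
      by (simp only: a(2) smult_sum)
  qed
qed

lemma decomp_sum:
  assumes "finite I" "\<And>i. i \<in> I \<Longrightarrow> decomp E R (f i)"
  shows "decomp E R (\<Sum>i\<in>I. f i)"
  using assms by (induction I rule: finite_induct) (auto intro: decomp_zero decomp_add)

lemma decomp_single:
  assumes "diam E X \<le> 2 * R" "goodop X A"
  shows "decomp E R A"
  unfolding decomp_def
proof (rule exI[where x="\<lambda>Y. if Y = X then A else 0"], intro conjI allI impI)
  show "A = (\<Sum>Y\<in>{X. diam E X \<le> 2 * R}. if Y = X then A else 0)"
    using assms(1) by (simp add: sum.delta)
qed (auto simp: assms(2) good_zero)

lemma smult_minus1: "A - B = A + smult_op (-1) B"
  by (intro ext) (simp add: smult_op_def)

lemma decomp_diff:
  assumes "decomp E R A" "decomp E R B" shows "decomp E R (A - B)"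
  unfolding smult_minus1 by (intro decomp_add decomp_smult assms)

lemma smult_zero_op: "smult_op 0 A = 0"
  by (intro ext) (simp add: smult_op_def)

lemma str_range_prop:
  fixes E :: "'v::finite \<Rightarrow> 'v \<Rightarrow> bool"
  shows "\<forall>i\<in>S. \<forall>j\<in>S. gdist E i j < str_range E S"
proof -
  let ?M = "Max (range (\<lambda>p. gdist E (fst p) (snd p)))"
  have "\<exists>R'. 0 < R' \<and> (\<forall>i\<in>S. \<forall>j\<in>S. gdist E i j < R')"
  proof (intro exI conjI ballI)
    fix i j
    have "gdist E (fst (i, j)) (snd (i, j)) \<in> range (\<lambda>p. gdist E (fst p) (snd p))"
      by (rule rangeI)
    then have "gdist E (fst (i, j)) (snd (i, j)) \<le> ?M" by (intro Max_ge) auto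
    then show "gdist E i j < Suc ?M" by simp
  qed simp
  then show ?thesis unfolding str_range_def by (rule LeastI2_ex) auto
qed

lemma diam_le:
  assumes "\<forall>i\<in>X. \<forall>j\<in>X. gdist E i j \<le> m"
  shows "diam E X \<le> 1 + m"
proof (cases "X = {}")
  case True then show ?thesis by (simp add: diam_def)
next
  case False
  have "Sup {gdist E i j | i j. i \<in> X \<and> j \<in> X} \<le> m"
  proof (rule cSup_least)
    obtain i where "i \<in> X" using False by blast
    then show "{gdist E i j | i j. i \<in> X \<and> j \<in> X} \<noteq> {}" by blast
  next
    fix x assume "x \<in> {gdist E i j | i j. i \<in> X \<and> j \<in> X}"
    then show "x \<le> m" using assms by blast
  qed
  then show ?thesis by (simp add: diam_def)
qed

lemma card1_reindex:
  fixes f :: "'v::finite set \<Rightarrow> 'b::comm_monoid_add"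
  shows "(\<Sum>K\<in>{K. card K = 1}. f K) = (\<Sum>k\<in>UNIV. f {k})"
proof -
  have "{K::'v set. card K = 1} = (\<lambda>k. {k}) ` UNIV" by (auto simp: card_1_singleton_iff)
  then show ?thesis by (simp add: sum.reindex inj_on_def)
qed

lemma splitK:
  fixes f :: "'v::finite set \<Rightarrow> 'b::comm_monoid_add"
  shows "(\<Sum>K\<in>UNIV. f K) = f {} + (\<Sum>k\<in>UNIV. f {k}) + (\<Sum>K\<in>{K. 2 \<le> card K}. f K)"
proof -
  have U: "(UNIV :: 'v set set) = insert {} ({K. card K = 1} \<union> {K. 2 \<le> card K})"
  proof (intro set_eqI iffI)
    fix K :: "'v set"
    show "K \<in> insert {} ({K. card K = 1} \<union> {K. 2 \<le> card K})"
    proof (cases "card K")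
      case 0 then show ?thesis by simp
    next
      case (Suc n) then show ?thesis by (cases n) auto
    qed
  qed simp
  have "(\<Sum>K\<in>UNIV. f K) = f {} + ((\<Sum>K\<in>{K. card K = 1}. f K) + (\<Sum>K\<in>{K. 2 \<le> card K}. f K))"
    by (subst U, subst sum.insert, simp_all, subst sum.union_disjoint, auto)
  then show ?thesis by (simp only: card1_reindex add.assoc)
qed

lemma asum:
  fixes a :: "'v::finite set \<Rightarrow> complex"
  shows "(\<Sum>J\<in>UNIV. a J * (if J \<subseteq> S then (if card (S - J) = 1 then w else 0) else 0))
       = w * (\<Sum>x\<in>S. a (S - {x}))"
proof -
  have "(\<Sum>J\<in>UNIV. a J * (if J \<subseteq> S then (if card (S - J) = 1 then w else 0) else 0))
      = (\<Sum>J\<in>UNIV. if J \<subseteq> S \<and> card (S - J) = 1 then w * a J else 0)"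
    by (rule sum.cong) auto
  also have "\<dots> = (\<Sum>J\<in>{J. J \<subseteq> S \<and> card (S - J) = 1}. w * a J)"
    by (simp add: sum.inter_filter[of UNIV, symmetric])
  also have "{J. J \<subseteq> S \<and> card (S - J) = 1} = (\<lambda>x. S - {x}) ` S"
  proof (intro set_eqI iffI)
    fix J assume "J \<in> {J. J \<subseteq> S \<and> card (S - J) = 1}"
    then obtain x where "S - J = {x}" "J \<subseteq> S" by (auto simp: card_1_singleton_iff)
    then have "x \<in> S" "J = S - {x}" by blast+
    then show "J \<in> (\<lambda>x. S - {x}) ` S" by blast
  next
    fix J assume "J \<in> (\<lambda>x. S - {x}) ` S"
    then obtain x where "x \<in> S" "J = S - {x}" by blast
    then have "S - J = {x}" by blast
    then have "card (S - J) = 1" by simp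
    moreover have "J \<subseteq> S" using \<open>J = S - {x}\<close> by blast
    ultimately show "J \<in> {J. J \<subseteq> S \<and> card (S - J) = 1}" by blast
  qed
  also have "(\<Sum>J\<in>(\<lambda>x. S - {x}) ` S. w * a J) = (\<Sum>x\<in>S. w * a (S - {x}))"
    by (rule sum.reindex_cong[where l="\<lambda>x. S - {x}"]) (auto simp: inj_on_def)
  finally show ?thesis by (simp add: sum_distrib_left)
qed

lemma good1:
  assumes "2 \<le> card K" "J \<union> K \<subseteq> X"
  shows "goodop X (sstr J K)"
proof -
  have "K \<noteq> {}" using assms(1) by auto
  then show ?thesis using assms by (simp add: goodop_def supp_sstr W2 V)
qed

lemma goodpair:
  fixes J :: "'v::finite set"
  assumes "J \<union> {k, k'} \<subseteq> X"
  shows "goodop X (sstr J {k} - sstr J {k'})"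
  unfolding goodop_def
proof (intro conjI)
  show "supported_in X (sstr J {k} - sstr J {k'})"
    using assms by (intro supp_diff supp_sstr) auto
  show "op_apply (sstr J {k} - sstr J {k'}) Wstate = (\<lambda>_. 0)"
  proof -
    have "Wstate {k} = (Wstate {k'} :: complex)" by (simp add: Wstate_def)
    then show ?thesis by (simp add: op_apply_diff W1 fun_eq_iff)
  qed
  show "op_apply (sstr J {k} - sstr J {k'}) vac = (\<lambda>_. 0)"
    by (simp add: op_apply_diff V)
qed

lemma diam_edge:
  assumes "simple_graph E" "connected_graph E" "E y z"
  shows "diam E {y, z} \<le> 2"
proof -
  have "E z y" using assms(1,3) by (simp add: simple_graph_def)
  then have "gdist E z y \<le> 1" by (rule gdist_edge)
  moreover have "gdist E y z \<le> 1" using assms(3) by (rule gdist_edge)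
  ultimately have "\<forall>i\<in>{y,z}. \<forall>j\<in>{y,z}. gdist E i j \<le> 1"
    by (auto simp: gdist_self)
  then have "diam E {y, z} \<le> 1 + 1" by (rule diam_le)
  then show ?thesis by simp
qed

theorem proposition4:
  fixes E :: "'v::finite \<Rightarrow> 'v \<Rightarrow> bool"
    and R :: nat
    and H :: "'v op"
    and lam :: complex
  assumes "simple_graph E"
    and "connected_graph E"
    and "0 < R"
    and "card (UNIV :: 'v set) > max_degree E ^ (4 * R) + 1"
    and "range_le E R H"
    and "op_apply H Wstate = (\<lambda>S. lam * Wstate S)"
  shows "\<exists>(\<Omega>::complex) (\<omega>::complex) (h :: 'v set \<Rightarrow> 'v op).
           (\<forall>X. diam E X \<le> 2 * R \<longrightarrow>
                supported_in X (h X) \<and> op_apply (h X) Wstate = (\<lambda>_. 0) \<and>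
                op_apply (h X) vac = (\<lambda>_. 0)) \<and>
           H = smult_op \<Omega> id_op + smult_op \<omega> (\<Sum>i\<in>UNIV. sstr {i} {i})
               + (\<Sum>X\<in>{X. diam E X \<le> 2 * R}. h X)"
proof -
  note sg = assms(1) and cg = assms(2) and R0 = assms(3) and NB = assms(4)
  obtain c where Hc: "H = (\<lambda>S T. \<Sum>J\<in>UNIV. \<Sum>K\<in>UNIV. c J K * sstr J K S T)"
    and cR: "\<forall>J K. c J K \<noteq> 0 \<longrightarrow> str_range E (J \<union> K) \<le> R"
    using assms(5) unfolding range_le_def by blast
  have D2: "2 \<le> max_degree E" by (rule deg_ge2[OF sg cg R0 NB])
  let ?D = "max_degree E"
  let ?N = "card (UNIV :: 'v set)"
  define w :: complex where "w = 1 / complex_of_real (sqrt (real ?N))"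
  have WS: "Wstate S = (if card S = 1 then w else 0)" for S :: "'v set"
    by (simp add: Wstate_def w_def)
  have w0: "w \<noteq> 0"
  proof -
    have "0 < ?N" by (simp add: card_gt_0_iff)
    then show ?thesis by (simp add: w_def)
  qed
  have DR: "?D ^ R \<le> ?D ^ (4 * R)" using D2 by (intro power_increasing) auto
  have far: "c J K = 0" if "i \<in> J \<union> K" "j \<in> J \<union> K" "R \<le> gdist E i j" for J K i j
  proof (rule ccontr)
    assume "c J K \<noteq> 0"
    then have "str_range E (J \<union> K) \<le> R" using cR by blast
    moreover have "gdist E i j < str_range E (J \<union> K)" using str_range_prop that(1,2) by blast
    ultimately show False using that(3) by simp
  qed
  have cdiam: "diam E (J \<union> K) \<le> R" if "c J K \<noteq> 0" for J K
  proof -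
    have "gdist E i j \<le> R - 1" if "i \<in> J \<union> K" "j \<in> J \<union> K" for i j
    proof -
      have "\<not> R \<le> gdist E i j" using far[of i J K j] that \<open>c J K \<noteq> 0\<close> by blast
      then show ?thesis by simp
    qed
    then have "\<forall>i\<in>J \<union> K. \<forall>j\<in>J \<union> K. gdist E i j \<le> R - 1" by blast
    then have "diam E (J \<union> K) \<le> 1 + (R - 1)" by (rule diam_le)
    then show ?thesis using R0 by simp
  qed
  define a where "a J = c J {}" for J
  define b where "b J = (\<Sum>k\<in>UNIV. c J {k})" for J

  have eqS: "b S + (\<Sum>x\<in>S. a (S - {x})) = (if card S = 1 then lam else 0)" for S
  proof -
    have "op_apply H Wstate S = (\<Sum>T\<in>UNIV. \<Sum>J\<in>UNIV. \<Sum>K\<in>UNIV. c J K * (sstr J K S T * Wstate T))"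
      by (simp add: op_apply_def Hc sum_distrib_right mult.assoc)
    also have "\<dots> = (\<Sum>J\<in>UNIV. \<Sum>T\<in>UNIV. \<Sum>K\<in>UNIV. c J K * (sstr J K S T * Wstate T))"
      by (rule sum.swap)
    also have "\<dots> = (\<Sum>J\<in>UNIV. \<Sum>K\<in>UNIV. \<Sum>T\<in>UNIV. c J K * (sstr J K S T * Wstate T))"
      by (intro sum.cong refl sum.swap)
    also have "\<dots> = (\<Sum>J\<in>UNIV. \<Sum>K\<in>UNIV. c J K * op_apply (sstr J K) Wstate S)"
      by (simp add: op_apply_def sum_distrib_left)
    also have "\<dots> = (\<Sum>J\<in>UNIV. a J * (if J \<subseteq> S then (if card (S - J) = 1 then w else 0) else 0)
                     + (if S = J then w * b J else 0))"
    proof (rule sum.cong[OF refl])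
      fix J
      have "(\<Sum>K\<in>UNIV. c J K * op_apply (sstr J K) Wstate S)
          = c J {} * op_apply (sstr J {}) Wstate S + (\<Sum>k\<in>UNIV. c J {k} * op_apply (sstr J {k}) Wstate S)
            + (\<Sum>K\<in>{K. 2 \<le> card K}. c J K * op_apply (sstr J K) Wstate S)"
        by (rule splitK)
      also have "(\<Sum>K\<in>{K. 2 \<le> card K}. c J K * op_apply (sstr J K) Wstate S) = 0"
        by (rule sum.neutral) (simp add: W2)
      also have "(\<Sum>k\<in>UNIV. c J {k} * op_apply (sstr J {k}) Wstate S) = (if S = J then w * b J else 0)"
        by (simp add: W1 WS b_def sum_distrib_left mult.commute)
      also have "c J {} * op_apply (sstr J {}) Wstate S = a J * (if J \<subseteq> S then (if card (S - J) = 1 then w else 0) else 0)"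
        by (simp add: W0 WS a_def)
      finally show "(\<Sum>K\<in>UNIV. c J K * op_apply (sstr J K) Wstate S) =
          a J * (if J \<subseteq> S then (if card (S - J) = 1 then w else 0) else 0) + (if S = J then w * b J else 0)"
        by simp
    qed
    also have "\<dots> = w * (\<Sum>x\<in>S. a (S - {x})) + w * b S"
      by (simp add: sum.distrib asum)
    finally have "w * (\<Sum>x\<in>S. a (S - {x})) + w * b S = op_apply H Wstate S" by simp
    also have "\<dots> = lam * Wstate S" by (simp add: assms(6))
    finally have "w * (\<Sum>x\<in>S. a (S - {x})) + w * b S = lam * Wstate S" .
    then have "w * ((\<Sum>x\<in>S. a (S - {x})) + b S) = w * (if card S = 1 then lam else 0)"
      by (simp add: WS distrib_left mult.commute)
    then show ?thesis using w0 by (simp add: add.commute)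
  qed
  have b_far: "b S = 0" if "i \<in> S" "j \<in> S" "R \<le> gdist E i j" for S i j
    unfolding b_def by (rule sum.neutral) (use far that in blast)
  have a_far: "a J = 0" if "i \<in> J" "j \<in> J" "R \<le> gdist E i j" for J i j
    unfolding a_def using far that by blast

  have pair: "a {u} + a {v} = 0" if "R \<le> gdist E u v" for u v
  proof -
    have uv: "u \<noteq> v" using that R0 by (auto simp: gdist_self)
    have "b {u, v} = 0" using b_far[of u "{u,v}" v] that by simp
    with eqS[of "{u, v}"] uv show ?thesis by (simp add: insert_Diff_if add.commute)
  qed
  have a1: "a {x} = 0" for x
  proof -
    have "?D ^ R < ?N" using DR NB by linarith
    then have "card {x} * ?D ^ R < ?N" by simp
    from far_exists[OF cg D2 this] obtain i where i: "R \<le> gdist E x i" by blast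
    have c2: "card {x, i} \<le> 2"
      by (cases "x = i") auto
    have "card {x, i} * ?D ^ R \<le> 2 * ?D ^ R"
      using c2 by (rule mult_right_mono) simp
    also have "\<dots> \<le> ?D * ?D ^ R" using D2 by (rule mult_right_mono) simp
    also have "\<dots> = ?D ^ (R + 1)" by simp
    also have "\<dots> \<le> ?D ^ (4 * R)" using D2 R0 by (intro power_increasing) auto
    finally have "card {x, i} * ?D ^ R < ?N" using NB by linarith
    from far_exists[OF cg D2 this] obtain j where j: "R \<le> gdist E x j" "R \<le> gdist E i j" by blast
    have e1: "a {x} + a {i} = 0" by (rule pair[OF i])
    have e2: "a {x} + a {j} = 0" by (rule pair[OF j(1)])
    have e3: "a {i} + a {j} = 0" by (rule pair[OF j(2)])
    have h1: "a {i} = - a {x}" using e1 by (simp add: add_eq_0_iff)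
    have h2: "a {j} = - a {x}" using e2 by (simp add: add_eq_0_iff)
    have "- a {x} + - a {x} = 0" using e3 unfolding h1 h2 .
    then have "a {x} + a {x} = 0" by (simp only: minus_add_distrib[symmetric] neg_equal_0_iff_equal)
    then have "2 * a {x} = 0" by (simp only: mult_2)
    then show ?thesis by simp
  qed
  have a2: "a J = 0" if "2 \<le> card J" for J
  proof (rule ccontr)
    assume anz: "a J \<noteq> 0"
    have fJ: "finite J" by simp
    have "J \<noteq> {}" using that by auto
    then obtain j0 where j0: "j0 \<in> J" by blast
    have sub: "J \<subseteq> {y. gdist E j0 y < R}"
    proof
      fix y assume y: "y \<in> J"
      show "y \<in> {y. gdist E j0 y < R}"
      proof (rule ccontr)
        assume "y \<notin> {y. gdist E j0 y < R}"
        then have "R \<le> gdist E j0 y" by simp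
        then have "a J = 0" by (rule a_far[OF j0 y])
        with anz show False by contradiction
      qed
    qed
    have "card J \<le> card {y. gdist E j0 y < R}" using sub by (rule card_mono[rotated]) simp
    also have "\<dots> < ?D ^ R" by (rule ball_card[OF cg D2])
    finally have cJ: "card J < ?D ^ R" .
    have "card J * ?D ^ R \<le> ?D ^ R * ?D ^ R" using less_imp_le[OF cJ] by (rule mult_right_mono) simp
    also have "\<dots> = ?D ^ (R + R)" by (simp add: power_add)
    also have "\<dots> \<le> ?D ^ (4 * R)" using D2 by (intro power_increasing) auto
    finally have "card J * ?D ^ R < ?N" using NB by linarith
    from far_exists[OF cg D2 this] obtain i where i: "\<forall>y\<in>J. R \<le> gdist E y i" by blast
    have iJ: "i \<notin> J"
    proof
      assume "i \<in> J"
      then have "R \<le> gdist E i i" using i by blast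
      then show False using R0 by (simp add: gdist_self)
    qed
    have bz: "b (insert i J) = 0"
      by (rule b_far[of j0 "insert i J" i]) (use i j0 in auto)
    have sz: "(\<Sum>x\<in>J. a (insert i J - {x})) = 0"
    proof (rule sum.neutral, intro ballI)
      fix x assume x: "x \<in> J"
      have "card (J - {x}) \<noteq> 0" using that x fJ by (simp add: card_Diff_singleton)
      then have "J - {x} \<noteq> {}" by auto
      then obtain z where z: "z \<in> J" "z \<noteq> x" by blast
      show "a (insert i J - {x}) = 0"
      proof (rule a_far[of z _ i])
        show "z \<in> insert i J - {x}" using z by blast
        show "i \<in> insert i J - {x}" using x iJ by blast
        show "R \<le> gdist E z i" using i z by blast
      qed
    qed
    have sumS: "(\<Sum>x\<in>insert i J. a (insert i J - {x})) = a (insert i J - {i}) + (\<Sum>x\<in>J. a (insert i J - {x}))"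
      by (rule sum.insert[OF fJ iJ])
    have c1: "card (insert i J) \<noteq> 1" using that iJ fJ \<open>J \<noteq> {}\<close> by simp
    have EQ: "b (insert i J) + (\<Sum>x\<in>insert i J. a (insert i J - {x})) = (if card (insert i J) = 1 then lam else 0)"
      by (rule eqS)
    have ij: "insert i J - {i} = J" using iJ by blast
    have "a J = 0" using EQ unfolding sumS sz bz ij using c1 by simp
    with anz show False by contradiction
  qed
  have a0: "a J = 0" if "J \<noteq> {}" for J
  proof -
    have "card J \<noteq> 0" using that by simp
    then consider "card J = 1" | "2 \<le> card J" by linarith
    then show ?thesis
    proof cases
      case 1 then obtain x where "J = {x}" by (auto simp: card_1_singleton_iff)
      then show ?thesis using a1 by simp
    next
      case 2 then show ?thesis by (rule a2)
    qed
  qed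
  have b0: "b {} = 0" using eqS[of "{}"] by simp
  have b1: "b {x} = lam - c {} {}" for x using eqS[of "{x}"] by (simp add: a_def eq_diff_eq)
  have b2: "b S = 0" if "2 \<le> card S" for S
  proof -
    have "(\<Sum>x\<in>S. a (S - {x})) = 0"
    proof (rule sum.neutral, intro ballI)
      fix x assume "x \<in> S"
      then have "card (S - {x}) \<noteq> 0" using that by (simp add: card_Diff_singleton)
      then have "S - {x} \<noteq> {}" by auto
      then show "a (S - {x}) = 0" by (rule a0)
    qed
    then show ?thesis using eqS[of S] that by simp
  qed

  define r :: 'v where "r = undefined"
  define j0 where "j0 J = (if J = {} then r else (SOME x. x \<in> J))" for J :: "'v set"
  have j0J: "j0 J \<in> J" if "J \<noteq> {}" for J using that unfolding j0_def by (simp add: some_in_eq)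
  have path: "decomp E R (sstr {} {k} - sstr {} {r})" for k
  proof -
    have "(r, k) \<in> (edges E)\<^sup>*" using cg by (simp add: connected_graph_def)
    then show ?thesis
    proof (induction rule: rtrancl_induct)
      case base then show ?case by (simp only: diff_self decomp_zero)
    next
      case (step y z)
      have e: "E y z" using step(2) by (simp add: edges_def)
      have "decomp E R (sstr {} {z} - sstr {} {y})"
      proof (rule decomp_single)
        show "diam E {y, z} \<le> 2 * R" using diam_edge[OF sg cg e] R0 by simp
        show "goodop {y, z} (sstr {} {z} - sstr {} {y})" by (rule goodpair) auto
      qed
      then have "decomp E R ((sstr {} {z} - sstr {} {y}) + (sstr {} {y} - sstr {} {r}))"
        using step(3) by (rule decomp_add)
      moreover have "(sstr {} {z} - sstr {} {y}) + (sstr {} {y} - sstr {} {r}) = sstr {} {z} - sstr {} {r}"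
        by (intro ext) simp
      ultimately show ?case by metis
    qed
  qed
  define D where "D J = (\<Sum>K\<in>{K. 2 \<le> card K}. smult_op (c J K) (sstr J K))
      + (\<Sum>k\<in>UNIV. smult_op (c J {k}) (sstr J {k} - sstr J {j0 J}))" for J
  have t1: "decomp E R (smult_op (c J K) (sstr J K))" if "2 \<le> card K" for J K
  proof (cases "c J K = 0")
    case True then show ?thesis by (simp add: smult_zero_op decomp_zero)
  next
    case False
    have "decomp E R (sstr J K)"
    proof (rule decomp_single[where X="J \<union> K"])
      show "diam E (J \<union> K) \<le> 2 * R" using cdiam[OF False] by simp
      show "goodop (J \<union> K) (sstr J K)" using that by (intro good1) auto
    qed
    then show ?thesis by (rule decomp_smult)
  qed
  have t2: "decomp E R (smult_op (c J {k}) (sstr J {k} - sstr J {j0 J}))" for J k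
  proof (cases "J = {}")
    case True then show ?thesis using path[of k] by (simp add: j0_def decomp_smult)
  next
    case False
    show ?thesis
    proof (cases "c J {k} = 0")
      case True then show ?thesis by (simp add: smult_zero_op decomp_zero)
    next
      case cnz: False
      have "decomp E R (sstr J {k} - sstr J {j0 J})"
      proof (rule decomp_single[where X="J \<union> {k}"])
        show "diam E (J \<union> {k}) \<le> 2 * R" using cdiam[OF cnz] by simp
        show "goodop (J \<union> {k}) (sstr J {k} - sstr J {j0 J})"
          using j0J[OF False] by (intro goodpair) auto
      qed
      then show ?thesis by (rule decomp_smult)
    qed
  qed
  have decD: "decomp E R (D J)" for J
    unfolding D_def
  proof (rule decomp_add)
    show "decomp E R (\<Sum>K\<in>{K. 2 \<le> card K}. smult_op (c J K) (sstr J K))"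
      by (rule decomp_sum) (auto intro: t1)
    show "decomp E R (\<Sum>k\<in>UNIV. smult_op (c J {k}) (sstr J {k} - sstr J {j0 J}))"
      by (rule decomp_sum) (auto intro: t2)
  qed
  have "decomp E R (\<Sum>J\<in>UNIV. D J)" by (rule decomp_sum) (auto intro: decD)
  then obtain h where h: "\<forall>X. diam E X \<le> 2 * R \<longrightarrow> goodop X (h X)"
    "(\<Sum>J\<in>UNIV. D J) = (\<Sum>X\<in>{X. diam E X \<le> 2 * R}. h X)"
    unfolding decomp_def by blast
  have ident: "H = smult_op (c {} {}) id_op + smult_op (lam - c {} {}) (\<Sum>i\<in>UNIV. sstr {i} {i})
      + (\<Sum>J\<in>UNIV. D J)"
  proof (intro ext)
    fix S T
    have perJ: "(\<Sum>K\<in>UNIV. c J K * sstr J K S T)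
       = D J S T + (c J {} * sstr J {} S T + b J * sstr J {j0 J} S T)" for J
    proof -
      have "D J S T = (\<Sum>K\<in>{K. 2 \<le> card K}. c J K * sstr J K S T)
          + (\<Sum>k\<in>UNIV. c J {k} * (sstr J {k} S T - sstr J {j0 J} S T))"
        by (simp add: D_def sum_fun_apply2 smult_op_def)
      also have "(\<Sum>k\<in>UNIV. c J {k} * (sstr J {k} S T - sstr J {j0 J} S T))
          = (\<Sum>k\<in>UNIV. c J {k} * sstr J {k} S T) - b J * sstr J {j0 J} S T"
        by (simp add: b_def right_diff_distrib sum_subtractf sum_distrib_right)
      finally show ?thesis using splitK[of "\<lambda>K. c J K * sstr J K S T"]
        by (simp add: algebra_simps)
    qed
    have gJ: "c J {} * sstr J {} S T + b J * sstr J {j0 J} S T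
        = (if J = {} then c {} {} * id_op S T else 0)
          + (if card J = 1 then (lam - c {} {}) * sstr J J S T else 0)" for J
    proof (cases "J = {}")
      case True then show ?thesis using b0 by (simp add: sstr_def id_op_def)
    next
      case False
      have aJ: "c J {} = 0" using a0[OF False] by (simp add: a_def)
      show ?thesis
      proof (cases "card J = 1")
        case True
        then obtain x where x: "J = {x}" by (auto simp: card_1_singleton_iff)
        then have "j0 J = x" using j0J[OF False] by simp
        then show ?thesis using x aJ b1[of x] by simp
      next
        case c1: False
        have "card J \<noteq> 0" using False by simp
        then have "2 \<le> card J" using c1 by linarith
        then show ?thesis using aJ b2 False c1 by simp
      qed
    qed
    have "H S T = (\<Sum>J\<in>UNIV. \<Sum>K\<in>UNIV. c J K * sstr J K S T)" by (simp add: Hc)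
    also have "\<dots> = (\<Sum>J\<in>UNIV. D J S T)
        + (\<Sum>J\<in>UNIV. c J {} * sstr J {} S T + b J * sstr J {j0 J} S T)"
      by (simp add: perJ sum.distrib)
    also have "(\<Sum>J\<in>UNIV. c J {} * sstr J {} S T + b J * sstr J {j0 J} S T)
        = c {} {} * id_op S T + (\<Sum>J\<in>UNIV. if card J = 1 then (lam - c {} {}) * sstr J J S T else 0)"
      by (simp only: gJ sum.distrib) simp
    also have "(\<Sum>J\<in>UNIV. if card J = 1 then (lam - c {} {}) * sstr J J S T else 0)
        = (\<Sum>J\<in>{J. card J = 1}. (lam - c {} {}) * sstr J J S T)"
      by (simp only: sum.inter_filter[of UNIV, symmetric] finite) simp
    also have "\<dots> = (\<Sum>i\<in>UNIV. (lam - c {} {}) * sstr {i} {i} S T)" by (rule card1_reindex)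
    finally show "H S T = (smult_op (c {} {}) id_op + smult_op (lam - c {} {}) (\<Sum>i\<in>UNIV. sstr {i} {i})
      + (\<Sum>J\<in>UNIV. D J)) S T"
      by (simp add: smult_op_def sum_fun_apply2 sum_distrib_left)
  qed
  have "H = smult_op (c {} {}) id_op + smult_op (lam - c {} {}) (\<Sum>i\<in>UNIV. sstr {i} {i})
      + (\<Sum>X\<in>{X. diam E X \<le> 2 * R}. h X)" using ident h(2) by simp
  then show ?thesis using h(1) unfolding goodop_def by blast
qed

end
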